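(* Let $\mathfrak{g}=\widehat{\mathfrak{sl}}_2$, let $\Lambda=w_1\Lambda_1+w_2\Lambda_2$ with $w_1,w_2\in\mathbb{Z}_{\ge0}$, and let $\mathcal{C}$ be a categorical module over $\mathfrak{g}$ whose support equals the support of $V(\Lambda)$. Let $\mu=\Lambda-b_1\alpha_1-b_2\alpha_2$ be a dominant weight in this support, and let $k^\pm_{12}$ be as defined below. Then: (a) if $b_2=n<b_1$, or if $b_1=b_2=n+1$ and $w_1=0$, then $(k^-_{12},k^+_{12})=(n,n)$; (b) if $b_1=b_2=n$ with $w_1\neq0$ and $w_2\neq0$, then $(k^-_{12},k^+_{12})=(n,n-1)$; (c) if $b_1=n<b_2$, or if $b_1=b_2=n+1$ and $w_2=0$, then $(k^-_{12},k^+_{12})=(n+1,n-1)$. In particular the possible pairs $(k^-_{12},k^+_{12})$ are exactly of the forms $(n,n)$, $(n,n-1)$, $(n+1,n-1)$.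
   Context: For $\widehat{\mathfrak{sl}}_2$: simple roots $\alpha_1=\epsilon_1-\epsilon_2$ and $\alpha_2=\epsilon_2-\epsilon_1+\delta$ (the affine node), $\delta=\alpha_1+\alpha_2$; $\Lambda_1,\Lambda_2$ are fundamental weights, $\alpha_j^\vee(\Lambda_i)=\delta_{ij}$. The positive real roots are $\alpha_{12;n}=\alpha_1+n\delta$ ($n\ge0$) and $\alpha_{21;n}=-\alpha_1+n\delta$ ($n\ge1$). A categorical module is a representation of the Khovanov–Lauda–Rouquier 2-category (abelian categories $\mathcal{C}_\lambda$ with exact functors $\mathcal{E}_i,\mathcal{F}_i$ shifting weights by $\pm\alpha_i$, etc.); its support is $\{\lambda:\mathcal{C}_\lambda\neq0\}$. $N_\mu=\{\alpha\text{ positive real root}:\mathcal{C}_{\mu+\alpha}\neq0\}$. Define $k^+_{12}=\max(\{-1\}\cup\{n:\alpha_{12;n}\in N_\mu\})$ and $k^-_{12}=k^+_{21}=\max(\{0\}\cup\{n:\alpha_{21;n}\in N_\mu\})$. *)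

theory Defs
  imports Main
begin

text \<open>Weights of affine sl2 in the coset Lambda + Q, with Lambda = w1 Lambda1 + w2 Lambda2,
  are encoded by their coordinates (b1,b2) :: int * int, standing for
  Lambda - b1 alpha1 - b2 alpha2.  Cartan matrix [[2,-2],[-2,2]].\<close>

type_synonym wt = "int \<times> int"

definition pair1 :: "nat \<Rightarrow> nat \<Rightarrow> wt \<Rightarrow> int" where
  "pair1 w1 w2 b = int w1 - 2 * fst b + 2 * snd b"

definition pair2 :: "nat \<Rightarrow> nat \<Rightarrow> wt \<Rightarrow> int" where
  "pair2 w1 w2 b = int w2 - 2 * snd b + 2 * fst b"

definition dominant :: "nat \<Rightarrow> nat \<Rightarrow> wt \<Rightarrow> bool" where
  "dominant w1 w2 b \<longleftrightarrow> pair1 w1 w2 b \<ge> 0 \<and> pair2 w1 w2 b \<ge> 0"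

text \<open>Simple reflections s_i(lambda) = lambda - alpha_i^vee(lambda) alpha_i.\<close>
definition refl1 :: "nat \<Rightarrow> nat \<Rightarrow> wt \<Rightarrow> wt" where
  "refl1 w1 w2 b = (fst b + pair1 w1 w2 b, snd b)"

definition refl2 :: "nat \<Rightarrow> nat \<Rightarrow> wt \<Rightarrow> wt" where
  "refl2 w1 w2 b = (fst b, snd b + pair2 w1 w2 b)"

inductive weyl_rel :: "nat \<Rightarrow> nat \<Rightarrow> wt \<Rightarrow> wt \<Rightarrow> bool" for w1 w2 where
  refl: "weyl_rel w1 w2 b b"
| step1: "weyl_rel w1 w2 b c \<Longrightarrow> weyl_rel w1 w2 b (refl1 w1 w2 c)"
| step2: "weyl_rel w1 w2 b c \<Longrightarrow> weyl_rel w1 w2 b (refl2 w1 w2 c)"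

text \<open>Support (set of weights) of the integrable highest weight module V(Lambda):
  for positive level, P(Lambda) = W . { lambda dominant, lambda \<le> Lambda }  (Kac, Prop. 12.6);
  for Lambda = 0, V(0) is the trivial module with the single weight 0.\<close>
definition suppV :: "nat \<Rightarrow> nat \<Rightarrow> wt set" where
  "suppV w1 w2 = (if w1 = 0 \<and> w2 = 0 then {(0, 0)} else {b. \<exists>c. weyl_rel w1 w2 b c \<and> dominant w1 w2 c \<and> fst c \<ge> 0 \<and> snd c \<ge> 0})"

text \<open>Positive real roots: A12 n = alpha1 + n delta (n \<ge> 0), A21 n = -alpha1 + n delta (n \<ge> 1).\<close>
datatype posroot = A12 nat | A21 nat

definition pos_real_roots :: "posroot set" where
  "pos_real_roots = range A12 \<union> {A21 n | n. n \<ge> 1}"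

text \<open>Coordinates (c1,c2) of a root as c1 alpha1 + c2 alpha2 (delta = alpha1 + alpha2).\<close>
fun root_coords :: "posroot \<Rightarrow> wt" where
  "root_coords (A12 n) = (int n + 1, int n)"
| "root_coords (A21 n) = (int n - 1, int n)"

text \<open>mu + alpha in coordinates (mu = Lambda - b1 alpha1 - b2 alpha2).\<close>
definition add_root :: "wt \<Rightarrow> posroot \<Rightarrow> wt" where
  "add_root b a = (fst b - fst (root_coords a), snd b - snd (root_coords a))"

definition N_set :: "wt set \<Rightarrow> wt \<Rightarrow> posroot set" where
  "N_set S mu = {a \<in> pos_real_roots. add_root mu a \<in> S}"

definition kplus12 :: "wt set \<Rightarrow> wt \<Rightarrow> int" where
  "kplus12 S mu = Max ({-1} \<union> {int n | n. A12 n \<in> N_set S mu})"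

definition kminus12 :: "wt set \<Rightarrow> wt \<Rightarrow> int" where
  "kminus12 S mu = Max ({0} \<union> {int n | n. A21 n \<in> N_set S mu})"

end

theory Submission
  imports Defs
begin


definition Jf :: "nat \<Rightarrow> nat \<Rightarrow> wt \<Rightarrow> int" where
  "Jf w1 w2 b = int w1 * fst b + int w2 * snd b - (fst b - snd b)^2"

lemma orbit_inv:
  assumes "weyl_rel w1 w2 b e"
  shows "Jf w1 w2 e = Jf w1 w2 b \<and> (\<exists>q::int. pair1 w1 w2 e = pair1 w1 w2 b + 2*(int w1 + int w2)*q
          \<or> pair1 w1 w2 e = - pair1 w1 w2 b + 2*(int w1 + int w2)*q)"
  using assms
proof (induction rule: weyl_rel.induct)
  case refl
  then show ?case by (intro conjI exI[of _ 0]) auto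
next
  case (step1 b c)
  then obtain q where q: "pair1 w1 w2 c = pair1 w1 w2 b + 2*(int w1 + int w2)*q
          \<or> pair1 w1 w2 c = - pair1 w1 w2 b + 2*(int w1 + int w2)*q" by blast
  have J: "Jf w1 w2 (refl1 w1 w2 c) = Jf w1 w2 c"
    by (simp add: Jf_def refl1_def pair1_def power2_eq_square algebra_simps)
  have P: "pair1 w1 w2 (refl1 w1 w2 c) = - pair1 w1 w2 c"
    by (simp add: refl1_def pair1_def algebra_simps)
  show ?case using step1 J P q
    by (intro conjI exI[of _ "-q"]) (auto simp: algebra_simps)
next
  case (step2 b c)
  then obtain q where q: "pair1 w1 w2 c = pair1 w1 w2 b + 2*(int w1 + int w2)*q
          \<or> pair1 w1 w2 c = - pair1 w1 w2 b + 2*(int w1 + int w2)*q" by blast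
  have J: "Jf w1 w2 (refl2 w1 w2 c) = Jf w1 w2 c"
    by (simp add: Jf_def refl2_def pair1_def pair2_def power2_eq_square algebra_simps)
  have P: "pair1 w1 w2 (refl2 w1 w2 c) = 2*(int w1 + int w2) - pair1 w1 w2 c"
    by (simp add: refl2_def pair1_def pair2_def algebra_simps)
  show ?case using step2 J P q
    by (intro conjI exI[of _ "1-q"]) (auto simp: algebra_simps)
qed

lemma q_zero:
  fixes k q :: int
  assumes "k > 0" "-k \<le> 2*k*q" "2*k*q \<le> k"
  shows "q = 0"
proof (rule ccontr)
  assume "q \<noteq> 0"
  then consider "q \<ge> 1" | "q \<le> -1" by linarith
  then show False
  proof cases
    case 1
    then have "k*q \<ge> k*1" using assms(1) by (intro mult_left_mono) auto
    then show False using assms by linarith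
  next
    case 2
    then have "k*q \<le> k*(-1)" using assms(1) by (intro mult_left_mono) auto
    then show False using assms by linarith
  qed
qed

lemma q_01:
  fixes k q :: int
  assumes "k > 0" "0 \<le> 2*k*q" "2*k*q \<le> 2*k"
  shows "q = 0 \<or> q = 1"
proof (rule ccontr)
  assume "\<not> (q = 0 \<or> q = 1)"
  then consider "q \<ge> 2" | "q \<le> -1" by linarith
  then show False
  proof cases
    case 1
    then have "k*q \<ge> k*2" using assms(1) by (intro mult_left_mono) auto
    then show False using assms by linarith
  next
    case 2
    then have "k*q \<le> k*(-1)" using assms(1) by (intro mult_left_mono) auto
    then show False using assms by linarith
  qed
qed

lemma uniq_int:
  fixes k u v r :: int
  assumes k: "k > 0" and "0 \<le> u" "u \<le> k" "0 \<le> v" "v \<le> k"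
    and h: "u - v = 2*k*r \<or> u + v = 2*k*r"
  shows "u = v"
  using h
proof
  assume r: "u - v = 2*k*r"
  have "r = 0" by (rule q_zero[OF k]) (use r assms in linarith)+
  then show ?thesis using r by simp
next
  assume r: "u + v = 2*k*r"
  have r1: "0 \<le> 2*k*r" using r assms by linarith
  have r2: "2*k*r \<le> 2*k" using r assms by linarith
  have "r = 0 \<or> r = 1" by (rule q_01[OF k r1 r2])
  then show ?thesis using r assms by auto
qed

lemma det_int:
  fixes k w1 w2 x y x0 y0 :: int
  assumes "k = w1 + w2" "k > 0" "x - y = x0 - y0"
    "w1 * x + w2 * y - (x - y)^2 = w1 * x0 + w2 * y0 - (x0 - y0)^2"
  shows "x = x0 \<and> y = y0"
proof -
  obtain d where d: "x = y + d" "x0 = y0 + d" using assms(3) by (metis add.commute diff_add_cancel)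
  have "w1 * x + w2 * y = w1 * x0 + w2 * y0" using assms(3,4) by simp
  then have "w1 * y + w2 * y = w1 * y0 + w2 * y0" using d by (simp add: algebra_simps)
  then have "k * y = k * y0" using assms(1) by (simp add: algebra_simps)
  then have "y = y0" using assms(2) by simp
  then show ?thesis using assms(3) by simp
qed

lemma dom_unique:
  assumes k: "int w1 + int w2 > 0"
    and r1: "weyl_rel w1 w2 b c" and r2: "weyl_rel w1 w2 b c0"
    and d1: "dominant w1 w2 c" and d2: "dominant w1 w2 c0"
  shows "c = c0"
proof -
  define K where "K = int w1 + int w2"
  have K: "K > 0" using k K_def by simp
  obtain q where q: "pair1 w1 w2 c = pair1 w1 w2 b + 2*K*q
          \<or> pair1 w1 w2 c = - pair1 w1 w2 b + 2*K*q" and J1: "Jf w1 w2 c = Jf w1 w2 b"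
    using orbit_inv[OF r1] unfolding K_def by blast
  obtain p where p: "pair1 w1 w2 c0 = pair1 w1 w2 b + 2*K*p
          \<or> pair1 w1 w2 c0 = - pair1 w1 w2 b + 2*K*p" and J2: "Jf w1 w2 c0 = Jf w1 w2 b"
    using orbit_inv[OF r2] unfolding K_def by blast
  define u where "u = pair1 w1 w2 c"
  define v where "v = pair1 w1 w2 c0"
  define z where "z = pair1 w1 w2 b"
  have b1: "0 \<le> u" "u \<le> K"
    using d1 by (auto simp: dominant_def pair1_def pair2_def u_def K_def)
  have b2: "0 \<le> v" "v \<le> K"
    using d2 by (auto simp: dominant_def pair1_def pair2_def v_def K_def)
  have q': "u = z + 2*K*q \<or> u = - z + 2*K*q" using q unfolding u_def z_def .
  have p': "v = z + 2*K*p \<or> v = - z + 2*K*p" using p unfolding v_def z_def .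
  have "u - v = 2*K*(q-p) \<or> u + v = 2*K*(q+p)"
    using q' p' by (auto simp: algebra_simps)
  then have "u = v"
  proof
    assume "u - v = 2*K*(q-p)" then show ?thesis using uniq_int[OF K b1 b2, of "q-p"] by blast
  next
    assume "u + v = 2*K*(q+p)" then show ?thesis using uniq_int[OF K b1 b2, of "q+p"] by blast
  qed
  then have X: "pair1 w1 w2 c = pair1 w1 w2 c0" unfolding u_def v_def .
  obtain x y where c: "c = (x,y)" by (cases c)
  obtain x0 y0 where c0: "c0 = (x0,y0)" by (cases c0)
  have m: "x - y = x0 - y0" using X by (simp add: c c0 pair1_def)
  have "Jf w1 w2 c = Jf w1 w2 c0" using J1 J2 by simp
  then have "int w1 * x + int w2 * y - (x - y)^2 = int w1 * x0 + int w2 * y0 - (x0 - y0)^2"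
    by (simp add: Jf_def c c0)
  then have "x = x0 \<and> y = y0" using det_int[OF K_def K m] by blast
  then show ?thesis using c c0 by simp
qed


lemma memb:
  assumes k: "int w1 + int w2 > 0" and r: "weyl_rel w1 w2 b c0" and d: "dominant w1 w2 c0"
  shows "b \<in> suppV w1 w2 \<longleftrightarrow> fst c0 \<ge> 0 \<and> snd c0 \<ge> 0"
proof -
  have ne: "\<not> (w1 = 0 \<and> w2 = 0)" using k by auto
  show ?thesis
  proof
    assume "b \<in> suppV w1 w2"
    then obtain c where c: "weyl_rel w1 w2 b c" "dominant w1 w2 c" "fst c \<ge> 0" "snd c \<ge> 0"
      using ne by (auto simp: suppV_def)
    have "c = c0" by (rule dom_unique[OF k c(1) r c(2) d])
    then show "fst c0 \<ge> 0 \<and> snd c0 \<ge> 0" using c by simp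
  next
    assume "fst c0 \<ge> 0 \<and> snd c0 \<ge> 0"
    then have "b \<in> {b. \<exists>c. weyl_rel w1 w2 b c \<and> dominant w1 w2 c \<and> fst c \<ge> 0 \<and> snd c \<ge> 0}"
      using r d by blast
    then show "b \<in> suppV w1 w2" using ne by (simp only: suppV_def if_False)
  qed
qed

lemma r1: "weyl_rel w1 w2 b (refl1 w1 w2 b)"
  by (rule weyl_rel.step1[OF weyl_rel.refl])
lemma r2: "weyl_rel w1 w2 b (refl2 w1 w2 b)"
  by (rule weyl_rel.step2[OF weyl_rel.refl])
lemma r21: "weyl_rel w1 w2 b (refl1 w1 w2 (refl2 w1 w2 b))"
  by (rule weyl_rel.step1[OF weyl_rel.step2[OF weyl_rel.refl]])
lemma r12: "weyl_rel w1 w2 b (refl2 w1 w2 (refl1 w1 w2 b))"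
  by (rule weyl_rel.step2[OF weyl_rel.step1[OF weyl_rel.refl]])

definition Bp :: "nat \<Rightarrow> nat \<Rightarrow> int \<Rightarrow> int \<Rightarrow> int" where
  "Bp w1 w2 a c = (let X = int w1 - 2*a + 2*c; K = int w1 + int w2 in
     if X \<le> K - 2 then min (a-1) c else if X = K - 1 then min (a-1) (c-1)
     else if K \<ge> 2 then min (a-1) (c-2) else min (a-2) (c-2))"

definition Bm :: "nat \<Rightarrow> nat \<Rightarrow> int \<Rightarrow> int \<Rightarrow> int" where
  "Bm w1 w2 a c = (let X = int w1 - 2*a + 2*c; K = int w1 + int w2 in
     if X \<ge> 2 then min (a+1) c else if X = 1 then min a c
     else if K \<ge> 2 then min (a-1) c else min (a-1) (c-1))"

lemma plus_mem:
  assumes k: "int w1 + int w2 > 0" and d: "dominant w1 w2 (a, c)"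
  shows "(a - t - 1, c - t) \<in> suppV w1 w2 \<longleftrightarrow> t \<le> Bp w1 w2 a c"
proof -
  define X where "X = int w1 - 2*a + 2*c"
  define K where "K = int w1 + int w2"
  have XK: "0 \<le> X" "X \<le> K" using d by (auto simp: dominant_def pair1_def pair2_def X_def K_def)
  consider "X \<le> K - 2" | "X = K - 1" | "X = K" "K \<ge> 2" | "X = K" "K = 1" using XK k K_def by linarith
  then show ?thesis
  proof cases
    case 1
    have dd: "dominant w1 w2 (a - t - 1, c - t)" using 1 XK
      by (auto simp: dominant_def pair1_def pair2_def X_def K_def)
    show ?thesis using memb[OF k weyl_rel.refl dd] 1 by (auto simp: Bp_def Let_def X_def K_def)
  next
    case 2
    have e: "refl2 w1 w2 (a - t - 1, c - t) = (a - t - 1, c - t - 1)" using 2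
      by (simp add: refl2_def pair2_def X_def K_def)
    have dd: "dominant w1 w2 (a - t - 1, c - t - 1)" using 2 XK
      by (auto simp: dominant_def pair1_def pair2_def X_def K_def)
    show ?thesis using memb[OF k r2[of w1 w2 "(a - t - 1, c - t)", unfolded e] dd] 2
      by (auto simp: Bp_def Let_def X_def K_def)
  next
    case 3
    have e: "refl2 w1 w2 (a - t - 1, c - t) = (a - t - 1, c - t - 2)" using 3
      by (simp add: refl2_def pair2_def X_def K_def)
    have dd: "dominant w1 w2 (a - t - 1, c - t - 2)" using 3 XK
      by (auto simp: dominant_def pair1_def pair2_def X_def K_def)
    show ?thesis using memb[OF k r2[of w1 w2 "(a - t - 1, c - t)", unfolded e] dd] 3
      by (auto simp: Bp_def Let_def X_def K_def)
  next
    case 4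
    have e: "refl1 w1 w2 (refl2 w1 w2 (a - t - 1, c - t)) = (a - t - 2, c - t - 2)" using 4
      by (simp add: refl1_def refl2_def pair1_def pair2_def X_def K_def)
    have dd: "dominant w1 w2 (a - t - 2, c - t - 2)" using 4 XK
      by (auto simp: dominant_def pair1_def pair2_def X_def K_def)
    show ?thesis using memb[OF k r21[of w1 w2 "(a - t - 1, c - t)", unfolded e] dd] 4
      by (auto simp: Bp_def Let_def X_def K_def)
  qed
qed

lemma minus_mem:
  assumes k: "int w1 + int w2 > 0" and d: "dominant w1 w2 (a, c)"
  shows "(a - t + 1, c - t) \<in> suppV w1 w2 \<longleftrightarrow> t \<le> Bm w1 w2 a c"
proof -
  define X where "X = int w1 - 2*a + 2*c"
  define K where "K = int w1 + int w2"
  have XK: "0 \<le> X" "X \<le> K" using d by (auto simp: dominant_def pair1_def pair2_def X_def K_def)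
  consider "X \<ge> 2" | "X = 1" | "X = 0" "K \<ge> 2" | "X = 0" "K = 1" using XK k K_def by linarith
  then show ?thesis
  proof cases
    case 1
    have dd: "dominant w1 w2 (a - t + 1, c - t)" using 1 XK
      by (auto simp: dominant_def pair1_def pair2_def X_def K_def)
    show ?thesis using memb[OF k weyl_rel.refl dd] 1 by (auto simp: Bm_def Let_def X_def K_def)
  next
    case 2
    have e: "refl1 w1 w2 (a - t + 1, c - t) = (a - t, c - t)" using 2
      by (simp add: refl1_def pair1_def X_def K_def)
    have dd: "dominant w1 w2 (a - t, c - t)" using 2 XK
      by (auto simp: dominant_def pair1_def pair2_def X_def K_def)
    show ?thesis using memb[OF k r1[of w1 w2 "(a - t + 1, c - t)", unfolded e] dd] 2
      by (auto simp: Bm_def Let_def X_def K_def)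
  next
    case 3
    have e: "refl1 w1 w2 (a - t + 1, c - t) = (a - t - 1, c - t)" using 3
      by (simp add: refl1_def pair1_def X_def K_def)
    have dd: "dominant w1 w2 (a - t - 1, c - t)" using 3 XK
      by (auto simp: dominant_def pair1_def pair2_def X_def K_def)
    show ?thesis using memb[OF k r1[of w1 w2 "(a - t + 1, c - t)", unfolded e] dd] 3
      by (auto simp: Bm_def Let_def X_def K_def)
  next
    case 4
    have e: "refl2 w1 w2 (refl1 w1 w2 (a - t + 1, c - t)) = (a - t - 1, c - t - 1)" using 4
      by (simp add: refl1_def refl2_def pair1_def pair2_def X_def K_def)
    have dd: "dominant w1 w2 (a - t - 1, c - t - 1)" using 4 XK
      by (auto simp: dominant_def pair1_def pair2_def X_def K_def)
    show ?thesis using memb[OF k r12[of w1 w2 "(a - t + 1, c - t)", unfolded e] dd] 4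
      by (auto simp: Bm_def Let_def X_def K_def)
  qed
qed

lemma maxlem:
  fixes d B :: int
  assumes "d \<ge> -1"
  shows "Max (insert d {int n | n. d < int n \<and> int n \<le> B}) = max d B"
proof -
  have sub: "{int n | n. d < int n \<and> int n \<le> B} \<subseteq> {d..B}" by auto
  have fin: "finite (insert d {int n | n. d < int n \<and> int n \<le> B})"
    using finite_subset[OF sub] by simp
  show ?thesis
  proof (cases "B \<le> d")
    case True
    then have e: "{int n | n. d < int n \<and> int n \<le> B} = {}" by auto
    show ?thesis unfolding e using True by simp
  next
    case False
    have "B \<in> {int n | n. d < int n \<and> int n \<le> B}"
      using False assms by (intro CollectI exI[of _ "nat B"]) auto
    then show ?thesis using False
      by (intro Max_eqI[OF fin]) auto
  qed
qed


lemma kplus_val: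
  assumes k: "int w1 + int w2 > 0" and d: "dominant w1 w2 (a, c)"
  shows "kplus12 (suppV w1 w2) (a, c) = max (-1) (Bp w1 w2 a c)"
proof -
  have "{int n | n. A12 n \<in> N_set (suppV w1 w2) (a, c)} = {int n | n. -1 < int n \<and> int n \<le> Bp w1 w2 a c}"
  proof -
    have "A12 n \<in> N_set (suppV w1 w2) (a, c) \<longleftrightarrow> int n \<le> Bp w1 w2 a c" for n
    proof -
      have "A12 n \<in> N_set (suppV w1 w2) (a, c) \<longleftrightarrow> (a - int n - 1, c - int n) \<in> suppV w1 w2"
        by (simp add: N_set_def pos_real_roots_def add_root_def algebra_simps)
      then show ?thesis using plus_mem[OF k d, of "int n"] by simp
    qed
    then show ?thesis by auto
  qed
  then show ?thesis unfolding kplus12_def using maxlem[of "-1" "Bp w1 w2 a c"] by simp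
qed

lemma kminus_val:
  assumes k: "int w1 + int w2 > 0" and d: "dominant w1 w2 (a, c)"
  shows "kminus12 (suppV w1 w2) (a, c) = max 0 (Bm w1 w2 a c)"
proof -
  have "{int n | n. A21 n \<in> N_set (suppV w1 w2) (a, c)} = {int n | n. 0 < int n \<and> int n \<le> Bm w1 w2 a c}"
  proof -
    have "A21 n \<in> N_set (suppV w1 w2) (a, c) \<longleftrightarrow> 0 < int n \<and> int n \<le> Bm w1 w2 a c" for n
    proof -
      have "A21 n \<in> N_set (suppV w1 w2) (a, c) \<longleftrightarrow> 0 < int n \<and> (a - int n + 1, c - int n) \<in> suppV w1 w2"
        by (auto simp: N_set_def pos_real_roots_def add_root_def algebra_simps)
      then show ?thesis using minus_mem[OF k d, of "int n"] by simp
    qed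
    then show ?thesis by auto
  qed
  then show ?thesis unfolding kminus12_def using maxlem[of "0" "Bm w1 w2 a c"] by simp
qed


theorem proposition4p1:
  fixes w1 w2 :: nat and S :: "wt set" and b1 b2 :: int
  assumes supp: "S = suppV w1 w2"
    and dom: "dominant w1 w2 (b1, b2)"
    and mem: "(b1, b2) \<in> S"
  shows "(\<forall>n::nat. (b2 = int n \<and> int n < b1) \<or> (b1 = int n + 1 \<and> b2 = int n + 1 \<and> w1 = 0)
            \<longrightarrow> (kminus12 S (b1, b2), kplus12 S (b1, b2)) = (int n, int n))
       \<and> (\<forall>n::nat. b1 = int n \<and> b2 = int n \<and> w1 \<noteq> 0 \<and> w2 \<noteq> 0
            \<longrightarrow> (kminus12 S (b1, b2), kplus12 S (b1, b2)) = (int n, int n - 1))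
       \<and> (\<forall>n::nat. (b1 = int n \<and> int n < b2) \<or> (b1 = int n + 1 \<and> b2 = int n + 1 \<and> w2 = 0)
            \<longrightarrow> (kminus12 S (b1, b2), kplus12 S (b1, b2)) = (int n + 1, int n - 1))
       \<and> (\<exists>n::nat. (kminus12 S (b1, b2), kplus12 S (b1, b2)) \<in>
            {(int n, int n), (int n, int n - 1), (int n + 1, int n - 1)})"
  proof (cases "int w1 + int w2 > 0")
  case False
  then have w: "w1 = 0" "w2 = 0" by auto
  have S: "S = {(0,0)}" using supp w by (simp add: suppV_def)
  have ab: "b1 = 0" "b2 = 0" using mem S by auto
  have e1: "{int n | n. A12 n \<in> N_set S (b1, b2)} = {}"
    using S ab by (auto simp: N_set_def add_root_def)
  have e2: "{int n | n. A21 n \<in> N_set S (b1, b2)} = {}"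
    using S ab by (auto simp: N_set_def add_root_def pos_real_roots_def)
  have kp: "kplus12 S (b1, b2) = -1" unfolding kplus12_def e1 by simp
  have km: "kminus12 S (b1, b2) = 0" unfolding kminus12_def e2 by simp
  show ?thesis using kp km ab w by (auto intro!: exI[of _ 0])
next
  case True
  have kp: "kplus12 S (b1, b2) = max (-1) (Bp w1 w2 b1 b2)"
    using kplus_val[OF True dom] supp by simp
  have km: "kminus12 S (b1, b2) = max 0 (Bm w1 w2 b1 b2)"
    using kminus_val[OF True dom] supp by simp
  have nn: "b1 \<ge> 0" "b2 \<ge> 0" using memb[OF True weyl_rel.refl dom] mem supp by auto
  have XK: "0 \<le> int w1 - 2*b1 + 2*b2" "int w1 - 2*b1 + 2*b2 \<le> int w1 + int w2"
    using dom by (auto simp: dominant_def pair1_def pair2_def)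
  have A: "(kminus12 S (b1, b2), kplus12 S (b1, b2)) = (int n, int n)"
    if "(b2 = int n \<and> int n < b1) \<or> (b1 = int n + 1 \<and> b2 = int n + 1 \<and> w1 = 0)" for n
    using that kp km nn XK True by (auto simp: Bp_def Bm_def Let_def)
  have B: "(kminus12 S (b1, b2), kplus12 S (b1, b2)) = (int n, int n - 1)"
    if "b1 = int n \<and> b2 = int n \<and> w1 \<noteq> 0 \<and> w2 \<noteq> 0" for n
    using that kp km nn XK True by (auto simp: Bp_def Bm_def Let_def)
  have C: "(kminus12 S (b1, b2), kplus12 S (b1, b2)) = (int n + 1, int n - 1)"
    if "(b1 = int n \<and> int n < b2) \<or> (b1 = int n + 1 \<and> b2 = int n + 1 \<and> w2 = 0)" for n
    using that kp km nn XK True by (auto simp: Bp_def Bm_def Let_def)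
  have D: "\<exists>n::nat. (kminus12 S (b1, b2), kplus12 S (b1, b2)) \<in>
            {(int n, int n), (int n, int n - 1), (int n + 1, int n - 1)}"
  proof -
    consider "b2 < b1" | "b1 < b2" | "b1 = b2" "b1 \<ge> 1" "w1 = 0" | "b1 = b2" "b1 \<ge> 1" "w2 = 0"
      | "b1 = b2" "w1 \<noteq> 0" "w2 \<noteq> 0" | "b1 = 0" "b2 = 0" using nn by linarith
    then show ?thesis
    proof cases
      case 1 then show ?thesis using A[of "nat b2"] nn by (intro exI[of _ "nat b2"]) auto
    next
      case 2 then show ?thesis using C[of "nat b1"] nn by (intro exI[of _ "nat b1"]) auto
    next
      case 3 then show ?thesis using A[of "nat (b1 - 1)"] nn by (intro exI[of _ "nat (b1 - 1)"]) auto
    next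
      case 4 then show ?thesis using C[of "nat (b1 - 1)"] nn by (intro exI[of _ "nat (b1 - 1)"]) auto
    next
      case 5 then show ?thesis using B[of "nat b1"] nn by (intro exI[of _ "nat b1"]) auto
    next
      case 6
      have "(kminus12 S (b1, b2), kplus12 S (b1, b2)) = (0, -1)"
        using 6 kp km XK True by (auto simp: Bp_def Bm_def Let_def)
      then show ?thesis by (intro exI[of _ 0]) simp
    qed
  qed
  show ?thesis using A B C D by blast
qed

end
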